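(* A countably infinite graph $G$ is HE-homogeneous if and only if it is HH-homogeneous and the following two conditions hold: (1) $\mathcal{H}(G)\cap\overline{\mathcal{H}}(G)=\varnothing$; (2) $\mathcal{H}(G)$ is downward-closed in $(\mathrm{Age}(G),\preceq)$ (equivalently, $\overline{\mathcal{H}}(G)$ is upward-closed in $(\mathrm{Age}(G),\preceq)$).
   Context: All graphs are undirected and loopless; subgraphs are induced. A homomorphism maps adjacent vertices to adjacent vertices. $G$ is HH-homogeneous (resp. HE-homogeneous) if every homomorphism between finite induced subgraphs of $G$ is the restriction of an endomorphism (resp. surjective endomorphism) of $G$. $\mathrm{Age}(G)$ is the class of (isomorphism types of) finite graphs embeddable in $G$ as induced subgraphs. A co-cone over a finite $X\subseteq G$ is a vertex $v\in G\setminus X$ adjacent to no vertex of $X$. $\mathcal H(G)$ is the set of $A\in\mathrm{Age}(G)$ for which there is an embedding $e:A\to G$ such that $G$ contains a co-cone over $e[A]$; $\overline{\mathcal H}(G)$ is the set of $A\in\mathrm{Age}(G)$ for which there is an embedding $e:A\to G$ such that no vertex of $G\setminus e[A]$ is a co-cone over $e[A]$. For $A,B\in\mathrm{Age}(G)$, $A\preceq B$ means there is a surjective homomorphism $A\to B$. A subset $X$ is downward-closed if $x\in X$ and $y\preceq x$ imply $y\in X$, and upward-closed if $y\in X$ and $y\preceq x$ imply $x\in X$. *)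

theory Defs
  imports Main "HOL-Library.Countable_Set"
begin

text \<open>The graph G has vertex type 'a (all of UNIV) and adjacency relation E.
Finite graphs (elements of the age) are pairs (V, R) with V a finite set of
naturals and R a symmetric irreflexive relation supported on V.\<close>

type_synonym fgraph = "nat set \<times> (nat \<Rightarrow> nat \<Rightarrow> bool)"

definition is_graph :: "('a \<Rightarrow> 'a \<Rightarrow> bool) \<Rightarrow> bool" where
  "is_graph E \<longleftrightarrow> (\<forall>x y. E x y \<longrightarrow> E y x) \<and> (\<forall>x. \<not> E x x)"

definition is_fgraph :: "fgraph \<Rightarrow> bool" where
  "is_fgraph A \<longleftrightarrow> finite (fst A)
     \<and> (\<forall>x y. snd A x y \<longrightarrow> x \<in> fst A \<and> y \<in> fst A)
     \<and> (\<forall>x y. snd A x y \<longrightarrow> snd A y x) \<and> (\<forall>x. \<not> snd A x x)"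

definition is_endo :: "('a \<Rightarrow> 'a \<Rightarrow> bool) \<Rightarrow> ('a \<Rightarrow> 'a) \<Rightarrow> bool" where
  "is_endo E g \<longleftrightarrow> (\<forall>x y. E x y \<longrightarrow> E (g x) (g y))"

definition hom_on :: "('a \<Rightarrow> 'a \<Rightarrow> bool) \<Rightarrow> 'a set \<Rightarrow> ('a \<Rightarrow> 'a) \<Rightarrow> bool" where
  "hom_on E X f \<longleftrightarrow> (\<forall>x\<in>X. \<forall>y\<in>X. E x y \<longrightarrow> E (f x) (f y))"

definition HH_homogeneous :: "('a \<Rightarrow> 'a \<Rightarrow> bool) \<Rightarrow> bool" where
  "HH_homogeneous E \<longleftrightarrow> (\<forall>X f. finite X \<and> hom_on E X f \<longrightarrow>
     (\<exists>g. is_endo E g \<and> (\<forall>x\<in>X. g x = f x)))"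

definition HE_homogeneous :: "('a \<Rightarrow> 'a \<Rightarrow> bool) \<Rightarrow> bool" where
  "HE_homogeneous E \<longleftrightarrow> (\<forall>X f. finite X \<and> hom_on E X f \<longrightarrow>
     (\<exists>g. is_endo E g \<and> surj g \<and> (\<forall>x\<in>X. g x = f x)))"

definition embedding :: "('a \<Rightarrow> 'a \<Rightarrow> bool) \<Rightarrow> fgraph \<Rightarrow> (nat \<Rightarrow> 'a) \<Rightarrow> bool" where
  "embedding E A e \<longleftrightarrow> inj_on e (fst A) \<and>
     (\<forall>x\<in>fst A. \<forall>y\<in>fst A. snd A x y \<longleftrightarrow> E (e x) (e y))"

definition Age :: "('a \<Rightarrow> 'a \<Rightarrow> bool) \<Rightarrow> fgraph set" where
  "Age E = {A. is_fgraph A \<and> (\<exists>e. embedding E A e)}"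

definition cocone :: "('a \<Rightarrow> 'a \<Rightarrow> bool) \<Rightarrow> 'a set \<Rightarrow> 'a \<Rightarrow> bool" where
  "cocone E X v \<longleftrightarrow> v \<notin> X \<and> (\<forall>x\<in>X. \<not> E v x)"

definition Hset :: "('a \<Rightarrow> 'a \<Rightarrow> bool) \<Rightarrow> fgraph set" where
  "Hset E = {A \<in> Age E. \<exists>e. embedding E A e \<and> (\<exists>v. cocone E (e ` fst A) v)}"

definition Hbar :: "('a \<Rightarrow> 'a \<Rightarrow> bool) \<Rightarrow> fgraph set" where
  "Hbar E = {A \<in> Age E. \<exists>e. embedding E A e \<and> \<not> (\<exists>v. cocone E (e ` fst A) v)}"

definition hom_le :: "fgraph \<Rightarrow> fgraph \<Rightarrow> bool" where
  "hom_le A B \<longleftrightarrow> (\<exists>h. h ` fst A = fst B \<and>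
     (\<forall>x\<in>fst A. \<forall>y\<in>fst A. snd A x y \<longrightarrow> snd B (h x) (h y)))"

definition downward_closed_in :: "fgraph set \<Rightarrow> fgraph set \<Rightarrow> bool" where
  "downward_closed_in S X \<longleftrightarrow> X \<subseteq> S \<and> (\<forall>x\<in>X. \<forall>y\<in>S. hom_le y x \<longrightarrow> y \<in> X)"

end

theory Submission
  imports Defs
begin

definition fg :: "('a \<Rightarrow> nat) \<Rightarrow> ('a \<Rightarrow> 'a \<Rightarrow> bool) \<Rightarrow> 'a set \<Rightarrow> fgraph" where
  "fg enc E W = (enc ` W, \<lambda>i j. i \<in> enc ` W \<and> j \<in> enc ` W \<and> E (inv enc i) (inv enc j))"

lemma fg_props:
  assumes enc: "inj enc" and g: "is_graph E" and W: "finite W"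
  shows "fg enc E W \<in> Age E" "embedding E (fg enc E W) (inv enc)" "inv enc ` fst (fg enc E W) = W"
proof -
  show emb: "embedding E (fg enc E W) (inv enc)"
    unfolding embedding_def fg_def using enc by (auto simp: inj_on_def)
  have "is_fgraph (fg enc E W)"
    unfolding is_fgraph_def fg_def using g W by (auto simp: is_graph_def)
  then show "fg enc E W \<in> Age E" using emb by (auto simp: Age_def)
  show "inv enc ` fst (fg enc E W) = W" using enc by (simp add: fg_def image_image)
qed

lemma cocone_pull:
  fixes E :: "'a \<Rightarrow> 'a \<Rightarrow> bool"
  assumes g: "is_graph E" and enc: "inj (enc::'a \<Rightarrow> nat)"
    and disj: "Hset E \<inter> Hbar E = {}" and dc: "downward_closed_in (Age E) (Hset E)"
    and W: "finite W" and hom: "hom_on E W \<psi>" and v: "cocone E (\<psi> ` W) v"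
  shows "\<exists>u. cocone E W u"
proof (rule ccontr)
  assume nc: "\<not> (\<exists>u. cocone E W u)"
  let ?A = "fg enc E W" let ?B = "fg enc E (\<psi> ` W)"
  have fW: "finite (\<psi> ` W)" using W by simp
  note A = fg_props[OF enc g W] and B = fg_props[OF enc g fW]
  have "?B \<in> Hset E" unfolding Hset_def using B v by (metis (mono_tags, lifting) mem_Collect_eq)
  moreover have "hom_le ?A ?B"
    unfolding hom_le_def
  proof (intro exI[of _ "\<lambda>i. enc (\<psi> (inv enc i))"] conjI)
    show "(\<lambda>i. enc (\<psi> (inv enc i))) ` fst ?A = fst ?B" using enc by (auto simp: fg_def image_image)
    show "\<forall>x\<in>fst ?A. \<forall>y\<in>fst ?A. snd ?A x y \<longrightarrow> snd ?B (enc (\<psi> (inv enc x))) (enc (\<psi> (inv enc y)))"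
      using enc hom by (auto simp: fg_def hom_on_def)
  qed
  ultimately have "?A \<in> Hset E" using dc A(1) unfolding downward_closed_in_def by blast
  moreover have "?A \<in> Hbar E" unfolding Hbar_def using A nc by auto
  ultimately show False using disj by auto
qed

lemma many_cocones:
  fixes E :: "'a \<Rightarrow> 'a \<Rightarrow> bool"
  assumes g: "is_graph E" and enc: "inj (enc::'a \<Rightarrow> nat)"
    and disj: "Hset E \<inter> Hbar E = {}" and dc: "downward_closed_in (Age E) (Hset E)"
    and D: "finite D" and hom: "hom_on E D h" and b: "b \<notin> h ` D"
    and Z: "Z = {u\<in>D. \<not> E (h u) b}" and z0: "z0 \<in> Z"
  shows "\<exists>I. finite I \<and> card I = n \<and> (\<forall>v\<in>I. cocone E Z v) \<and> (\<forall>v\<in>I. \<forall>w\<in>I. \<not> E v w)"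
proof (induction n)
  case 0 show ?case by (intro exI[of _ "{}"]) auto
next
  case (Suc n)
  then obtain I where I: "finite I" "card I = n" "\<forall>v\<in>I. cocone E Z v" "\<forall>v\<in>I. \<forall>w\<in>I. \<not> E v w"
    by blast
  define \<psi> where "\<psi> = (\<lambda>u. if u \<in> Z then h u else h z0)"
  have fin: "finite (Z \<union> I)" using D Z I(1) by auto
  have sym: "\<And>x y. E x y \<Longrightarrow> E y x" and irr: "\<And>x. \<not> E x x" using g by (auto simp: is_graph_def)
  have hom2: "hom_on E (Z \<union> I) \<psi>"
    unfolding hom_on_def
  proof (intro ballI impI)
    fix x y assume x: "x \<in> Z \<union> I" and y: "y \<in> Z \<union> I" and e: "E x y"
    have "x \<in> Z \<and> y \<in> Z"
    proof (rule ccontr)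
      assume "\<not> (x \<in> Z \<and> y \<in> Z)"
      then consider "x \<in> I" "y \<in> I" | "x \<in> I" "y \<in> Z" | "x \<in> Z" "y \<in> I" using x y by blast
      then show False
        using I(3,4) e sym unfolding cocone_def by cases blast+
    qed
    then show "E (\<psi> x) (\<psi> y)" using hom e Z unfolding \<psi>_def hom_on_def by auto
  qed
  have coc: "cocone E (\<psi> ` (Z \<union> I)) b"
    unfolding cocone_def \<psi>_def using b Z z0 sym by auto
  obtain u where u: "cocone E (Z \<union> I) u"
    using cocone_pull[OF g enc disj dc fin hom2 coc] by blast
  show ?case
  proof (intro exI[of _ "insert u I"] conjI)
    show "finite (insert u I)" using I(1) by simp
    show "card (insert u I) = Suc n" using I(1,2) u by (simp add: cocone_def)
    show "\<forall>v\<in>insert u I. cocone E Z v" using I(3) u by (auto simp: cocone_def)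
    show "\<forall>v\<in>insert u I. \<forall>w\<in>insert u I. \<not> E v w" using I(4) u sym irr unfolding cocone_def by (simp) (metis UnCI)
  qed
qed

lemma back_step:
  fixes E :: "'a \<Rightarrow> 'a \<Rightarrow> bool"
  assumes g: "is_graph E" and enc: "inj (enc::'a \<Rightarrow> nat)"
    and disj: "Hset E \<inter> Hbar E = {}" and dc: "downward_closed_in (Age E) (Hset E)"
    and inf: "infinite (UNIV::'a set)"
    and D: "finite D" and hom: "hom_on E D h" and b: "b \<notin> h ` D"
  shows "\<exists>x::'a. x \<notin> D \<and> (\<forall>u\<in>D. E x u \<longrightarrow> E (h u) b)"
proof (cases "{u\<in>D. \<not> E (h u) b} = {}")
  case True
  obtain x where "x \<notin> D" using ex_new_if_finite[OF inf D] by blast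
  then show ?thesis using True by auto
next
  case False
  then obtain z0 where z0: "z0 \<in> {u\<in>D. \<not> E (h u) b}" by blast
  obtain I where I: "finite I" "card I = Suc (card D)" "\<forall>v\<in>I. cocone E {u\<in>D. \<not> E (h u) b} v"
    using many_cocones[OF g enc disj dc D hom b refl z0] by blast
  have "\<not> I \<subseteq> D"
  proof
    assume "I \<subseteq> D" then have "card I \<le> card D" using D by (simp add: card_mono)
    then show False using I(2) by simp
  qed
  then obtain x where "x \<in> I" "x \<notin> D" by blast
  then show ?thesis using I(3) unfolding cocone_def by blast
qed



lemma ext_step:
  fixes E :: "'a \<Rightarrow> 'a \<Rightarrow> bool"
  assumes g: "is_graph E" and enc: "inj (enc::'a \<Rightarrow> nat)"
    and disj: "Hset E \<inter> Hbar E = {}" and dc: "downward_closed_in (Age E) (Hset E)"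
    and inf: "infinite (UNIV::'a set)" and HH: "HH_homogeneous E"
    and D: "finite D" and hom: "hom_on E D h"
  shows "\<exists>D' h'. finite D' \<and> D \<subseteq> D' \<and> (\<forall>x\<in>D. h' x = h x) \<and> hom_on E D' h' \<and> a \<in> D' \<and> b \<in> h' ` D'"
proof -
  have sym: "\<And>x y. E x y \<Longrightarrow> E y x" and irr: "\<And>x. \<not> E x x" using g by (auto simp: is_graph_def)
  obtain g0 where g0: "is_endo E g0" "\<forall>x\<in>D. g0 x = h x"
    using HH D hom unfolding HH_homogeneous_def by blast
  let ?D1 = "insert a D"
  have D1: "finite ?D1" using D by simp
  have hom1: "hom_on E ?D1 g0" using g0(1) by (auto simp: hom_on_def is_endo_def)
  show ?thesis
  proof (cases "b \<in> g0 ` ?D1")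
    case True
    then show ?thesis using D1 hom1 g0(2) by blast
  next
    case False
    obtain x where x: "x \<notin> ?D1" "\<forall>u\<in>?D1. E x u \<longrightarrow> E (g0 u) b"
      using back_step[OF g enc disj dc inf D1 hom1 False] by blast
    let ?h = "g0(x := b)"
    have "hom_on E (insert x ?D1) ?h"
      unfolding hom_on_def
    proof (intro ballI impI)
      fix u w assume u: "u \<in> insert x ?D1" and w: "w \<in> insert x ?D1" and e: "E u w"
      show "E (?h u) (?h w)"
      proof (cases "u = x")
        case True
        then have "w \<noteq> x" using e irr by auto
        then have "w \<in> ?D1" using w by auto
        then show ?thesis using True x e sym \<open>w \<noteq> x\<close> by auto
      next
        case False
        then have uD: "u \<in> ?D1" using u by auto
        show ?thesis
        proof (cases "w = x")
          case True
          then show ?thesis using False uD x e sym by auto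
        next
          case False
          then have "w \<in> ?D1" using w by auto
          then show ?thesis using \<open>u \<noteq> x\<close> False uD hom1 e unfolding hom_on_def by auto
        qed
      qed
    qed
    moreover have "\<forall>y\<in>D. ?h y = h y" using g0(2) x(1) by auto
    ultimately show ?thesis using D1
      by (intro exI[of _ "insert x ?D1"] exI[of _ ?h]) auto
  qed
qed

primrec iter_seq :: "'b \<Rightarrow> (nat \<Rightarrow> 'b \<Rightarrow> 'b) \<Rightarrow> nat \<Rightarrow> 'b" where
  "iter_seq z s 0 = z" | "iter_seq z s (Suc n) = s n (iter_seq z s n)"

theorem proposition5p8:
  fixes E :: "'a \<Rightarrow> 'a \<Rightarrow> bool"
  assumes "is_graph E"
    and "countable (UNIV :: 'a set)"
    and "infinite (UNIV :: 'a set)"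
  shows "HE_homogeneous E \<longleftrightarrow>
           HH_homogeneous E \<and> Hset E \<inter> Hbar E = {} \<and> downward_closed_in (Age E) (Hset E)"
proof
  assume HE: "HE_homogeneous E"
  have HH: "HH_homogeneous E" using HE unfolding HE_homogeneous_def HH_homogeneous_def by blast
  have disj: "Hset E \<inter> Hbar E = {}"
  proof (rule ccontr)
    assume "Hset E \<inter> Hbar E \<noteq> {}"
    then obtain A e1 e2 v where A: "A \<in> Age E" and e1: "embedding E A e1" "cocone E (e1 ` fst A) v"
      and e2: "embedding E A e2" "\<not> (\<exists>v. cocone E (e2 ` fst A) v)"
      unfolding Hset_def Hbar_def by blast
    let ?X = "e2 ` fst A" let ?f = "\<lambda>x. e1 (inv_into (fst A) e2 x)"
    have fin: "finite ?X" using A unfolding Age_def is_fgraph_def by auto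
    have hom: "hom_on E ?X ?f"
      using e1(1) e2(1) unfolding hom_on_def embedding_def
      by (auto simp: inv_into_f_f inv_into_into)
    obtain g where g: "is_endo E g" "surj g" "\<forall>x\<in>?X. g x = ?f x"
      using HE fin hom unfolding HE_homogeneous_def by blast
    obtain w where w: "v = g w" using g(2) by (metis surjD)
    have "w \<notin> ?X"
    proof
      assume "w \<in> ?X"
      then have "g w \<in> e1 ` fst A" using g(3) by (auto simp: inv_into_into)
      then show False using w e1(2) unfolding cocone_def by auto
    qed
    then obtain u where u: "u \<in> ?X" "E w u" using e2(2) unfolding cocone_def by blast
    have "E v (g u)" using g(1) u w unfolding is_endo_def by auto
    then have "E v (?f u)" using g(3) u(1) by simp
    moreover have "?f u \<in> e1 ` fst A" using u by (auto simp: inv_into_into)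
    ultimately show False using e1(2) unfolding cocone_def by auto
  qed
  have dc: "downward_closed_in (Age E) (Hset E)"
    unfolding downward_closed_in_def
  proof (intro conjI ballI impI)
    show "Hset E \<subseteq> Age E" unfolding Hset_def by auto
  next
    fix A B assume AH: "A \<in> Hset E" and B: "B \<in> Age E" and le: "hom_le B A"
    obtain eA v where eA: "embedding E A eA" "cocone E (eA ` fst A) v" using AH unfolding Hset_def by blast
    obtain eB where eB: "embedding E B eB" using B unfolding Age_def by blast
    obtain hh where hh: "hh ` fst B = fst A" "\<forall>x\<in>fst B. \<forall>y\<in>fst B. snd B x y \<longrightarrow> snd A (hh x) (hh y)"
      using le unfolding hom_le_def by blast
    have "\<exists>v. cocone E (eB ` fst B) v"
    proof (rule ccontr)
      assume nc: "\<not> (\<exists>v. cocone E (eB ` fst B) v)"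
      let ?X = "eB ` fst B" let ?f = "\<lambda>x. eA (hh (inv_into (fst B) eB x))"
      have fin: "finite ?X" using B unfolding Age_def is_fgraph_def by auto
      have hom: "hom_on E ?X ?f"
        unfolding hom_on_def
      proof (intro ballI impI)
        fix x y assume "x \<in> ?X" "y \<in> ?X" "E x y"
        then obtain a b where ab: "a \<in> fst B" "b \<in> fst B" "x = eB a" "y = eB b" "E (eB a) (eB b)" by blast
        then have "snd B a b" using eB unfolding embedding_def by blast
        then have "snd A (hh a) (hh b)" using hh(2) ab by blast
        moreover have "hh a \<in> fst A" "hh b \<in> fst A" using hh(1) ab by auto
        ultimately have "E (eA (hh a)) (eA (hh b))" using eA(1) unfolding embedding_def by blast
        moreover have "inv_into (fst B) eB x = a" "inv_into (fst B) eB y = b"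
          using ab eB unfolding embedding_def by (auto simp: inv_into_f_f)
        ultimately show "E (?f x) (?f y)" by simp
      qed
      obtain g where g: "is_endo E g" "surj g" "\<forall>x\<in>?X. g x = ?f x"
        using HE fin hom unfolding HE_homogeneous_def by blast
      have fimg: "\<And>x. x \<in> ?X \<Longrightarrow> g x \<in> eA ` fst A"
        using g(3) hh(1) eB unfolding embedding_def by (auto simp: inv_into_f_f)
      obtain w where w: "v = g w" using g(2) by (metis surjD)
      have "w \<notin> ?X" using fimg w eA(2) unfolding cocone_def by blast
      then obtain u where u: "u \<in> ?X" "E w u" using nc unfolding cocone_def by blast
      have "E v (g u)" using g(1) u w unfolding is_endo_def by auto
      then show False using fimg[OF u(1)] eA(2) unfolding cocone_def by auto
    qed
    then show "B \<in> Hset E" using B eB unfolding Hset_def by blast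
  qed
  show "HH_homogeneous E \<and> Hset E \<inter> Hbar E = {} \<and> downward_closed_in (Age E) (Hset E)"
    using HH disj dc by blast
next
  assume "HH_homogeneous E \<and> Hset E \<inter> Hbar E = {} \<and> downward_closed_in (Age E) (Hset E)"
  then have HH: "HH_homogeneous E" and disj: "Hset E \<inter> Hbar E = {}"
    and dc: "downward_closed_in (Age E) (Hset E)" by auto
  obtain enc :: "'a \<Rightarrow> nat" where bij: "bij enc"
    using countableE_infinite[OF assms(2,3)] by blast
  have enc: "inj enc" using bij bij_is_inj by blast
  define nth where "nth = inv enc"
  have nth_enc: "\<And>x. nth (enc x) = x" using enc by (simp add: nth_def)
  show "HE_homogeneous E"
    unfolding HE_homogeneous_def
  proof (intro allI impI)
    fix X f assume Xf: "finite X \<and> hom_on E X f"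
    define Inv where "Inv = (\<lambda>p::'a set \<times> ('a \<Rightarrow> 'a). finite (fst p) \<and> hom_on E (fst p) (snd p))"
    define Q where "Q = (\<lambda>n (p::'a set \<times> ('a \<Rightarrow> 'a)) (q::'a set \<times> ('a \<Rightarrow> 'a)).
        finite (fst q) \<and> fst p \<subseteq> fst q \<and> (\<forall>x\<in>fst p. snd q x = snd p x) \<and> hom_on E (fst q) (snd q)
        \<and> nth n \<in> fst q \<and> nth n \<in> snd q ` fst q)"
    define stp where "stp = (\<lambda>n p. SOME q. Q n p q)"
    define sq where "sq = iter_seq (X, f) stp"
    have Qstep: "Inv p \<Longrightarrow> Q n p (stp n p)" for p n
    proof -
      assume "Inv p"
      then have "\<exists>q. Q n p q"
        using ext_step[OF assms(1) enc disj dc assms(3) HH, of "fst p" "snd p" "nth n" "nth n"]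
        unfolding Inv_def Q_def by auto
      then show ?thesis unfolding stp_def by (rule someI_ex)
    qed
    have Iall: "Inv (sq n) \<and> Q n (sq n) (sq (Suc n))" for n
    proof (induction n)
      case 0
      have "Inv (sq 0)" using Xf by (simp add: sq_def Inv_def)
      then show ?case using Qstep by (simp add: sq_def)
    next
      case (Suc n)
      then have "Inv (sq (Suc n))" unfolding Q_def Inv_def by blast
      then show ?case using Qstep by (simp add: sq_def)
    qed
    have mono: "m \<le> n \<Longrightarrow> fst (sq m) \<subseteq> fst (sq n) \<and> (\<forall>x\<in>fst (sq m). snd (sq n) x = snd (sq m) x)" for m n
    proof (induction n rule: dec_induct)
      case base then show ?case by simp
    next
      case (step k)
      then show ?case using Iall[of k] unfolding Q_def by auto
    qed
    define g where "g = (\<lambda>x. snd (sq (Suc (enc x))) x)"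
    have inD: "x \<in> fst (sq (Suc (enc x)))" for x
      using Iall[of "enc x"] nth_enc unfolding Q_def by metis
    have gval: "Suc (enc x) \<le> n \<Longrightarrow> g x = snd (sq n) x" for x n
      using mono[of "Suc (enc x)" n] inD[of x] unfolding g_def by auto
    have inDn: "Suc (enc x) \<le> n \<Longrightarrow> x \<in> fst (sq n)" for x n
      using mono[of "Suc (enc x)" n] inD[of x] by auto
    show "\<exists>g. is_endo E g \<and> surj g \<and> (\<forall>x\<in>X. g x = f x)"
    proof (intro exI[of _ g] conjI)
      show "is_endo E g" unfolding is_endo_def
      proof (intro allI impI)
        fix x y assume e: "E x y"
        let ?n = "max (Suc (enc x)) (Suc (enc y))"
        have "hom_on E (fst (sq ?n)) (snd (sq ?n))" using Iall[of ?n] unfolding Inv_def by blast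
        moreover have "x \<in> fst (sq ?n)" "y \<in> fst (sq ?n)" by (auto intro: inDn)
        ultimately show "E (g x) (g y)" using e gval[of x ?n] gval[of y ?n] unfolding hom_on_def by auto
      qed
      show "surj g"
      proof (rule surjI)
        fix y
        have "nth (enc y) \<in> snd (sq (Suc (enc y))) ` fst (sq (Suc (enc y)))"
          using Iall[of "enc y"] unfolding Q_def by blast
        then obtain x where x: "x \<in> fst (sq (Suc (enc y)))" "snd (sq (Suc (enc y))) x = y"
          using nth_enc by auto
        define x' where "x' = x"
        let ?n = "max (Suc (enc x)) (Suc (enc y))"
        have "g x = snd (sq ?n) x" by (rule gval) auto
        also have "\<dots> = snd (sq (Suc (enc y))) x" using mono[of "Suc (enc y)" ?n] x(1) by auto
        finally have "g x = y" using x(2) by simp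
        then show "g (SOME x. g x = y) = y" by (rule someI)
      qed
      show "\<forall>x\<in>X. g x = f x"
      proof
        fix x assume "x \<in> X"
        then show "g x = f x" using mono[of 0 "Suc (enc x)"] unfolding g_def by (simp add: sq_def)
      qed
    qed
  qed
qed

end
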